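(* Let $X=\{a,\dots,b\}\subseteq\mathbb{N}$, let $f^p:\mathcal{P}^n\to X$ be a generalized median voter scheme with monotonic family of fixed ballots $p=\{p_S\}_{S\subseteq N}$, and let $i\in N$. (i) If $p_{N\setminus\{i\}}\le p_{\{i\}}$, then $x\in V_i$ if and only if $x<p_{N\setminus\{i\}}$ or $x>p_{\{i\}}$. (ii) If $p_{\{i\}}<p_{N\setminus\{i\}}$, then $V_i=X$.
   Context: $N=\{1,\dots,n\}$, $n\ge2$; $X=\{a,a+1,\dots,b\}$, $|X|\ge2$; $\mathcal{P}$ all strict linear orders on $X$; $t(P_i)$ the top of $P_i$. A monotonic family of fixed ballots: $p_S\in X$ for all $S\subseteq N$, $p_N=a$, $p_\emptyset=b$, and $T\subseteq Q$ implies $p_Q\le p_T$. $f^p(P)=\min_{S\subseteq N}\max_{j\in S}\{t(P_j),p_S\}$. Option set $O(P_i)=\{f^p(P_i,P_{-i}):P_{-i}\in\mathcal{P}^{n-1}\}$. Agent $i$ vetoes $x$ via $P_i$ if $x\notin O(P_i)$; $V_i$ is the set of alternatives $i$ vetoes via some preference. *)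

theory Defs
  imports Main
begin

text \<open>Agents N = {1..n}; alternatives X = {a..b} (natural numbers).
  A preference is a strict linear order on X, represented as a relation R
  with (x,y) \<in> R meaning x is strictly preferred to y.\<close>

definition is_pref :: "nat set \<Rightarrow> (nat \<times> nat) set \<Rightarrow> bool" where
  "is_pref X R \<longleftrightarrow> R \<subseteq> X \<times> X \<and> strict_linear_order_on X R"

definition prefs :: "nat set \<Rightarrow> (nat \<times> nat) set set" where
  "prefs X = {R. is_pref X R}"

definition top_pref :: "nat set \<Rightarrow> (nat \<times> nat) set \<Rightarrow> nat" where
  "top_pref X R = (THE x. x \<in> X \<and> (\<forall>y\<in>X. y \<noteq> x \<longrightarrow> (x, y) \<in> R))"

definition monotonic_fixed_ballots :: "nat \<Rightarrow> nat \<Rightarrow> nat \<Rightarrow> (nat set \<Rightarrow> nat) \<Rightarrow> bool" where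
  "monotonic_fixed_ballots n a b p \<longleftrightarrow>
     (\<forall>S. S \<subseteq> {1..n} \<longrightarrow> p S \<in> {a..b}) \<and>
     p {1..n} = a \<and> p {} = b \<and>
     (\<forall>T Q. T \<subseteq> Q \<and> Q \<subseteq> {1..n} \<longrightarrow> p Q \<le> p T)"

definition gmvs :: "nat \<Rightarrow> nat \<Rightarrow> nat \<Rightarrow> (nat set \<Rightarrow> nat) \<Rightarrow> (nat \<Rightarrow> (nat \<times> nat) set) \<Rightarrow> nat" where
  "gmvs n a b p P = Min ((\<lambda>S. Max ({p S} \<union> (\<lambda>j. top_pref {a..b} (P j)) ` S)) ` Pow {1..n})"

definition option_set :: "nat \<Rightarrow> nat \<Rightarrow> nat \<Rightarrow> (nat set \<Rightarrow> nat) \<Rightarrow> nat \<Rightarrow> (nat \<times> nat) set \<Rightarrow> nat set" where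
  "option_set n a b p i Pi =
     {gmvs n a b p (P(i := Pi)) | P. \<forall>j\<in>{1..n} - {i}. P j \<in> prefs {a..b}}"

definition veto_set :: "nat \<Rightarrow> nat \<Rightarrow> nat \<Rightarrow> (nat set \<Rightarrow> nat) \<Rightarrow> nat \<Rightarrow> nat set" where
  "veto_set n a b p i =
     {x \<in> {a..b}. \<exists>Pi \<in> prefs {a..b}. x \<notin> option_set n a b p i Pi}"

end

theory Submission
  imports Defs
begin

lemma top_char:
  assumes "R \<in> prefs X" "finite X" "X \<noteq> {}"
  shows "top_pref X R \<in> X \<and> (\<forall>y\<in>X. y \<noteq> top_pref X R \<longrightarrow> (top_pref X R, y) \<in> R)"
proof -
  have P: "is_pref X R" using assms(1) unfolding prefs_def by simp
  have sub: "R \<subseteq> X \<times> X" and tr: "trans R" and ir: "irrefl R" and tot: "total_on X R"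
    using P unfolding is_pref_def strict_linear_order_on_def by simp_all
  have fin: "finite R" using finite_subset[OF sub] assms(2) by simp
  have "acyclic R" using tr ir by (simp add: acyclic_irrefl)
  hence wf: "wf R" using fin finite_acyclic_wf by blast
  obtain x0 where x0: "x0 \<in> X" using assms(3) by blast
  obtain z where z: "z \<in> X" "\<forall>y. (y, z) \<in> R \<longrightarrow> y \<notin> X"
    using wf_eq_minimal[THEN iffD1, OF wf, rule_format, OF x0] by blast
  have zmax: "\<forall>y\<in>X. y \<noteq> z \<longrightarrow> (z, y) \<in> R"
  proof (intro ballI impI)
    fix y assume "y \<in> X" "y \<noteq> z"
    hence "(y, z) \<in> R \<or> (z, y) \<in> R" using tot z(1) unfolding total_on_def by blast
    thus "(z, y) \<in> R" using z(2) \<open>y \<in> X\<close> by blast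
  qed
  have uniq: "w = z" if "w \<in> X" "\<forall>y\<in>X. y \<noteq> w \<longrightarrow> (w, y) \<in> R" for w
  proof (rule ccontr)
    assume "w \<noteq> z"
    hence "(w, z) \<in> R" "(z, w) \<in> R" using that zmax z(1) by auto
    hence "(w, w) \<in> R" using tr unfolding trans_def by blast
    thus False using ir unfolding irrefl_def by blast
  qed
  have "top_pref X R = z"
    unfolding top_pref_def
  proof (rule the_equality)
    show "z \<in> X \<and> (\<forall>y\<in>X. y \<noteq> z \<longrightarrow> (z, y) \<in> R)" using z(1) zmax by blast
    fix w assume "w \<in> X \<and> (\<forall>y\<in>X. y \<noteq> w \<longrightarrow> (w, y) \<in> R)"
    thus "w = z" using uniq by blast
  qed
  thus ?thesis using z(1) zmax by simp
qed


lemma ex_pref: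
  fixes X :: "nat set"
  assumes "t \<in> X"
  shows "\<exists>R\<in>prefs X. top_pref X R = t"
proof -
  define R where "R = {(x, y). x \<in> X \<and> y \<in> X \<and> ((x = t \<and> y \<noteq> t) \<or> (x \<noteq> t \<and> y \<noteq> t \<and> x < y))}"
  have sub: "R \<subseteq> X \<times> X" unfolding R_def by blast
  have tr: "trans R"
  proof (rule transI)
    fix x y z assume "(x, y) \<in> R" "(y, z) \<in> R"
    thus "(x, z) \<in> R" unfolding R_def by auto
  qed
  have ir: "irrefl R" unfolding irrefl_def R_def by simp
  have tot: "total_on X R"
  proof (rule total_onI)
    fix x y assume "x \<in> X" "y \<in> X" "x \<noteq> y"
    thus "(x, y) \<in> R \<or> (y, x) \<in> R" unfolding R_def by auto
  qed
  have RP: "R \<in> prefs X"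
    unfolding prefs_def is_pref_def strict_linear_order_on_def using sub tr ir tot by blast
  have "top_pref X R = t"
    unfolding top_pref_def
  proof (rule the_equality)
    show "t \<in> X \<and> (\<forall>y\<in>X. y \<noteq> t \<longrightarrow> (t, y) \<in> R)" using assms unfolding R_def by blast
    fix w assume w: "w \<in> X \<and> (\<forall>y\<in>X. y \<noteq> w \<longrightarrow> (w, y) \<in> R)"
    show "w = t"
    proof (rule ccontr)
      assume "w \<noteq> t"
      hence "(w, t) \<in> R" using w assms by (simp del: R_def)
      thus False by (simp add: R_def)
    qed
  qed
  thus ?thesis using RP by blast
qed

lemma Max_ins_fin: "finite S \<Longrightarrow> finite ({c} \<union> (f::nat\<Rightarrow>nat) ` S) \<and> {c} \<union> f ` S \<noteq> {}"
  by auto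

lemma opt_char:
  assumes mfb: "monotonic_fixed_ballots n a b p" and iN: "i \<in> {1..n}" and n2: "n \<ge> 2"
    and ab: "a < b" and Pi: "Pi \<in> prefs {a..b}" and xX: "x \<in> {a..b}"
  shows "x \<in> option_set n a b p i Pi \<longleftrightarrow>
     min (top_pref {a..b} Pi) (p ({1..n} - {i})) \<le> x \<and> x \<le> max (top_pref {a..b} Pi) (p {i})"
proof -
  let ?X = "{a..b}" and ?N = "{1..n}"
  let ?q = "p (?N - {i})" and ?r = "p {i}" and ?t = "top_pref ?X Pi"
  have pX: "\<And>S. S \<subseteq> ?N \<Longrightarrow> p S \<in> ?X" and pN: "p ?N = a" and pE: "p {} = b"
    and mono: "\<And>T Q. T \<subseteq> Q \<Longrightarrow> Q \<subseteq> ?N \<Longrightarrow> p Q \<le> p T"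
    using mfb unfolding monotonic_fixed_ballots_def by auto
  have tX: "?t \<in> ?X" using top_char[OF Pi] ab by auto
  have finP: "finite ((\<lambda>S. Max ({p S} \<union> g ` S)) ` Pow ?N)"
    "(\<lambda>S. Max ({p S} \<union> g ` S)) ` Pow ?N \<noteq> {}" for g :: "nat \<Rightarrow> nat" by auto
  have finS: "finite ({p S} \<union> g ` S)" "{p S} \<union> g ` S \<noteq> {}" if "S \<subseteq> ?N" for S and g :: "nat \<Rightarrow> nat"
    using that finite_subset by auto
  show ?thesis
  proof
    assume "x \<in> option_set n a b p i Pi"
    then obtain P where P: "\<forall>j\<in>?N - {i}. P j \<in> prefs ?X" and x: "x = gmvs n a b p (P(i := Pi))"
      unfolding option_set_def by blast
    define g where "g = (\<lambda>j. top_pref ?X ((P(i := Pi)) j))"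
    have gi: "g i = ?t" by (simp add: g_def)
    have x': "x = Min ((\<lambda>S. Max ({p S} \<union> g ` S)) ` Pow ?N)" using x by (simp add: gmvs_def g_def)
    have "x \<le> Max ({p {i}} \<union> g ` {i})"
      unfolding x' using iN by (intro Min_le finP) (rule image_eqI[where x="{i}"], auto)
    also have "\<dots> = max ?t ?r" using gi by auto
    finally have up: "x \<le> max ?t ?r" .
    have "min ?t ?q \<le> Max ({p S} \<union> g ` S)" if S: "S \<subseteq> ?N" for S
    proof (cases "i \<in> S")
      case True
      hence "?t \<in> {p S} \<union> g ` S" using gi by (metis UnI2 image_eqI)
      hence "?t \<le> Max ({p S} \<union> g ` S)" by (rule Max_ge[OF finS(1)[OF S]])
      thus ?thesis by simp
    next
      case False
      hence "p S \<ge> ?q" using S by (intro mono) auto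
      moreover have "p S \<le> Max ({p S} \<union> g ` S)" by (rule Max_ge[OF finS(1)[OF S]]) simp
      ultimately show ?thesis by simp
    qed
    hence "min ?t ?q \<le> x" unfolding x' by (subst Min_ge_iff[OF finP]) auto
    with up show "min ?t ?q \<le> x \<and> x \<le> max ?t ?r" by simp
  next
    assume int: "min ?t ?q \<le> x \<and> x \<le> max ?t ?r"
    obtain Ry where Ry: "Ry \<in> prefs ?X" "top_pref ?X Ry = x" using ex_pref[OF xX] by blast
    define P where "P = (\<lambda>j::nat. Ry)"
    define g where "g = (\<lambda>j. top_pref ?X ((P(i := Pi)) j))"
    have gi: "g i = ?t" and gj: "\<And>j. j \<noteq> i \<Longrightarrow> g j = x" by (auto simp: g_def P_def Ry)
    have x': "gmvs n a b p (P(i := Pi)) = Min ((\<lambda>S. Max ({p S} \<union> g ` S)) ` Pow ?N)"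
      by (simp add: gmvs_def g_def)
    have lo: "x \<le> Max ({p S} \<union> g ` S)" if S: "S \<subseteq> ?N" for S
    proof (cases "\<exists>j\<in>S. j \<noteq> i")
      case True
      then obtain j where "j \<in> S" "j \<noteq> i" by blast
      hence "x \<in> {p S} \<union> g ` S" using gj by force
      hence "x \<le> Max ({p S} \<union> g ` S)" by (rule Max_ge[OF finS(1)[OF S]])
      thus ?thesis by simp
    next
      case False
      hence "S = {} \<or> S = {i}" by auto
      thus ?thesis
      proof
        assume "S = {}" thus ?thesis using pE xX by simp
      next
        assume "S = {i}" thus ?thesis using gi int by auto
      qed
    qed
    have hi: "\<exists>S\<in>Pow ?N. Max ({p S} \<union> g ` S) \<le> x"
    proof (cases "?t \<le> x")
      case True
      have "g ` ?N \<subseteq> {?t, x}" using gi gj by (metis empty_iff image_subsetI insert_iff)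
      hence "Max ({p ?N} \<union> g ` ?N) \<le> x" using True pN xX
        by (subst Max_le_iff[OF finS[of ?N g]]) auto
      thus ?thesis by blast
    next
      case False
      hence "?q \<le> x" using int by (simp add: min_def split: if_splits)
      have "g ` (?N - {i}) \<subseteq> {x}" using gj by auto
      hence "Max ({p (?N - {i})} \<union> g ` (?N - {i})) \<le> x"
        using \<open>?q \<le> x\<close>
        by (subst Max_le_iff[OF finS[of "?N - {i}" g]]) auto
      thus ?thesis by blast
    qed
    have "gmvs n a b p (P(i := Pi)) = x"
      unfolding x'
    proof (rule antisym)
      show "Min ((\<lambda>S. Max ({p S} \<union> g ` S)) ` Pow ?N) \<le> x"
        using hi by (subst Min_le_iff[OF finP]) auto
      show "x \<le> Min ((\<lambda>S. Max ({p S} \<union> g ` S)) ` Pow ?N)"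
        using lo by (subst Min_ge_iff[OF finP]) auto
    qed
    moreover have "\<forall>j\<in>?N - {i}. P j \<in> prefs ?X" using Ry by (simp add: P_def)
    ultimately show "x \<in> option_set n a b p i Pi" unfolding option_set_def by blast
  qed
qed


lemma veto_char:
  assumes mfb: "monotonic_fixed_ballots n a b p" and iN: "i \<in> {1..n}" and n2: "n \<ge> 2"
    and ab: "a < b" and xX: "x \<in> {a..b}"
  shows "x \<in> veto_set n a b p i \<longleftrightarrow>
     (\<exists>t\<in>{a..b}. \<not> (min t (p ({1..n} - {i})) \<le> x \<and> x \<le> max t (p {i})))"
proof
  assume "x \<in> veto_set n a b p i"
  then obtain Pi where Pi: "Pi \<in> prefs {a..b}" "x \<notin> option_set n a b p i Pi"
    unfolding veto_set_def by blast
  have "top_pref {a..b} Pi \<in> {a..b}" using top_char[OF Pi(1)] ab by auto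
  thus "\<exists>t\<in>{a..b}. \<not> (min t (p ({1..n} - {i})) \<le> x \<and> x \<le> max t (p {i}))"
    using Pi opt_char[OF mfb iN n2 ab Pi(1) xX] by blast
next
  assume "\<exists>t\<in>{a..b}. \<not> (min t (p ({1..n} - {i})) \<le> x \<and> x \<le> max t (p {i}))"
  then obtain t where t: "t \<in> {a..b}" "\<not> (min t (p ({1..n} - {i})) \<le> x \<and> x \<le> max t (p {i}))"
    by blast
  obtain Pi where Pi: "Pi \<in> prefs {a..b}" "top_pref {a..b} Pi = t" using ex_pref[OF t(1)] by blast
  show "x \<in> veto_set n a b p i"
    unfolding veto_set_def using xX Pi t opt_char[OF mfb iN n2 ab Pi(1) xX] by auto
qed

theorem lemma2:
  fixes n a b :: nat and p :: "nat set \<Rightarrow> nat" and i :: nat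
  assumes "n \<ge> 2" and "a < b"
    and "monotonic_fixed_ballots n a b p"
    and "i \<in> {1..n}"
  shows "(p ({1..n} - {i}) \<le> p {i} \<longrightarrow>
           (\<forall>x\<in>{a..b}. x \<in> veto_set n a b p i \<longleftrightarrow> x < p ({1..n} - {i}) \<or> x > p {i}))
       \<and> (p {i} < p ({1..n} - {i}) \<longrightarrow> veto_set n a b p i = {a..b})"
proof -
  have qX: "p ({1..n} - {i}) \<in> {a..b}" and rX: "p {i} \<in> {a..b}"
    using assms(3,4) unfolding monotonic_fixed_ballots_def by auto
  have aX: "a \<in> {a..b}" and bX: "b \<in> {a..b}" using assms(2) by auto
  note vc = veto_char[OF assms(3) assms(4) assms(1) assms(2)]
  show ?thesis
  proof (intro conjI impI)
    assume le: "p ({1..n} - {i}) \<le> p {i}"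
    show "\<forall>x\<in>{a..b}. x \<in> veto_set n a b p i \<longleftrightarrow> x < p ({1..n} - {i}) \<or> x > p {i}"
    proof
      fix x assume xX: "x \<in> {a..b}"
      show "x \<in> veto_set n a b p i \<longleftrightarrow> x < p ({1..n} - {i}) \<or> x > p {i}"
        unfolding vc[OF xX]
      proof
        assume "\<exists>t\<in>{a..b}. \<not> (min t (p ({1..n} - {i})) \<le> x \<and> x \<le> max t (p {i}))"
        thus "x < p ({1..n} - {i}) \<or> x > p {i}" by auto
      next
        assume h: "x < p ({1..n} - {i}) \<or> x > p {i}"
        show "\<exists>t\<in>{a..b}. \<not> (min t (p ({1..n} - {i})) \<le> x \<and> x \<le> max t (p {i}))"
        proof (cases "x < p ({1..n} - {i})")
          case True thus ?thesis using qX bX by (intro bexI[of _ b]) auto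
        next
          case False thus ?thesis using h rX aX by (intro bexI[of _ a]) auto
        qed
      qed
    qed
  next
    assume lt: "p {i} < p ({1..n} - {i})"
    show "veto_set n a b p i = {a..b}"
    proof
      show "veto_set n a b p i \<subseteq> {a..b}" unfolding veto_set_def by auto
      show "{a..b} \<subseteq> veto_set n a b p i"
      proof
        fix x assume xX: "x \<in> {a..b}"
        show "x \<in> veto_set n a b p i"
          unfolding vc[OF xX]
        proof (cases "x > p {i}")
          case True thus "\<exists>t\<in>{a..b}. \<not> (min t (p ({1..n} - {i})) \<le> x \<and> x \<le> max t (p {i}))"
            using rX aX by (intro bexI[of _ a]) auto
        next
          case False thus "\<exists>t\<in>{a..b}. \<not> (min t (p ({1..n} - {i})) \<le> x \<and> x \<le> max t (p {i}))"
            using lt qX bX by (intro bexI[of _ b]) auto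
        qed
      qed
    qed
  qed
qed

end
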